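(* Let $\Gamma$ be a finite connected $m$-regular graph and let $u$ be an eigenvector of (the adjacency matrix of) $\Gamma$ which takes exactly three distinct values $a_0,a_1,a_2$. For $i\in\{0,1,2\}$ let $C^i$ be the set of vertices $x$ with $u_x=a_i$. Suppose that there are no edges between $C^0$ and $C^2$, and that there is a number $\beta_1$ such that every vertex of $C^1$ is adjacent to exactly $\beta_1$ vertices of $C^2$. Then for all $i,j\in\{0,1,2\}$ the number of neighbours in $C^j$ of a vertex $x\in C^i$ does not depend on the choice of $x\in C^i$; consequently $C^0$ is a completely regular code in $\Gamma$, with distance partition $(C^0,C^1,C^2)$ and covering radius $2$.
   Context: For a nonempty vertex set $C$ of a connected regular graph, $C_i$ denotes the set of vertices at distance exactly $i$ from $C$, and the covering radius $\rho$ is the largest $i$ with $C_i\neq\emptyset$; $(C_0=C,C_1,\dots,C_\rho)$ is the distance partition. $C$ is a completely regular code if there are numbers $\gamma_i,\alpha_i,\beta_i$ such that every vertex of $C_i$ has exactly $\gamma_i$ neighbours in $C_{i-1}$, $\alpha_i$ neighbours in $C_i$ and $\beta_i$ neighbours in $C_{i+1}$, for all $i$. *)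

theory Defs
  imports Complex_Main
begin

definition simple_graph :: "'a set \<Rightarrow> ('a \<Rightarrow> 'a \<Rightarrow> bool) \<Rightarrow> bool" where
  "simple_graph V E \<longleftrightarrow> finite V \<and> (\<forall>x y. E x y \<longrightarrow> x \<in> V \<and> y \<in> V)
     \<and> (\<forall>x y. E x y \<longrightarrow> E y x) \<and> (\<forall>x. \<not> E x x)"

definition neighbours :: "'a set \<Rightarrow> ('a \<Rightarrow> 'a \<Rightarrow> bool) \<Rightarrow> 'a \<Rightarrow> 'a set" where
  "neighbours V E x = {y \<in> V. E x y}"

definition regular :: "'a set \<Rightarrow> ('a \<Rightarrow> 'a \<Rightarrow> bool) \<Rightarrow> nat \<Rightarrow> bool" where
  "regular V E m \<longleftrightarrow> (\<forall>x \<in> V. card (neighbours V E x) = m)"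

text \<open>A walk: nonempty list of vertices, consecutive ones adjacent; its length is
  length xs - 1.\<close>
definition walk :: "'a set \<Rightarrow> ('a \<Rightarrow> 'a \<Rightarrow> bool) \<Rightarrow> 'a list \<Rightarrow> bool" where
  "walk V E xs \<longleftrightarrow> xs \<noteq> [] \<and> set xs \<subseteq> V \<and> (\<forall>i. Suc i < length xs \<longrightarrow> E (xs ! i) (xs ! Suc i))"

definition connected_graph :: "'a set \<Rightarrow> ('a \<Rightarrow> 'a \<Rightarrow> bool) \<Rightarrow> bool" where
  "connected_graph V E \<longleftrightarrow> V \<noteq> {} \<and>
     (\<forall>x \<in> V. \<forall>y \<in> V. \<exists>xs. walk V E xs \<and> hd xs = x \<and> last xs = y)"

text \<open>Distance from a vertex set C to a vertex x (meaningful when x is reachable from C).\<close>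
definition reachable_from :: "'a set \<Rightarrow> ('a \<Rightarrow> 'a \<Rightarrow> bool) \<Rightarrow> 'a set \<Rightarrow> 'a \<Rightarrow> nat \<Rightarrow> bool" where
  "reachable_from V E C x n \<longleftrightarrow> (\<exists>xs. walk V E xs \<and> hd xs \<in> C \<and> last xs = x \<and> length xs = Suc n)"

definition dist_set :: "'a set \<Rightarrow> ('a \<Rightarrow> 'a \<Rightarrow> bool) \<Rightarrow> 'a set \<Rightarrow> 'a \<Rightarrow> nat" where
  "dist_set V E C x = (LEAST n. reachable_from V E C x n)"

definition dist_layer :: "'a set \<Rightarrow> ('a \<Rightarrow> 'a \<Rightarrow> bool) \<Rightarrow> 'a set \<Rightarrow> nat \<Rightarrow> 'a set" where
  "dist_layer V E C i = {x \<in> V. (\<exists>n. reachable_from V E C x n) \<and> dist_set V E C x = i}"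

definition covering_radius :: "'a set \<Rightarrow> ('a \<Rightarrow> 'a \<Rightarrow> bool) \<Rightarrow> 'a set \<Rightarrow> nat" where
  "covering_radius V E C = Max {i. dist_layer V E C i \<noteq> {}}"

definition completely_regular :: "'a set \<Rightarrow> ('a \<Rightarrow> 'a \<Rightarrow> bool) \<Rightarrow> 'a set \<Rightarrow> bool" where
  "completely_regular V E C \<longleftrightarrow> C \<noteq> {} \<and> C \<subseteq> V \<and>
     (\<forall>i. \<exists>\<gamma> \<alpha> \<beta>. \<forall>x \<in> dist_layer V E C i.
        card {y \<in> (if i = 0 then {} else dist_layer V E C (i - 1)). E x y} = \<gamma> \<and>
        card {y \<in> dist_layer V E C i. E x y} = \<alpha> \<and>
        card {y \<in> dist_layer V E C (Suc i). E x y} = \<beta>)"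

end

theory Submission
  imports Defs
begin



lemma walk_tail: assumes "walk V E (a # b # r)" shows "walk V E (b # r) \<and> E a b"
proof -
  have s: "set (a#b#r) \<subseteq> V" and h: "\<forall>i. Suc i < length (a#b#r) \<longrightarrow> E ((a#b#r)!i) ((a#b#r)!Suc i)"
    using assms unfolding walk_def by auto
  have "E a b" using h[rule_format, of 0] by simp
  moreover have "\<forall>i. Suc i < length (b#r) \<longrightarrow> E ((b#r)!i) ((b#r)!Suc i)"
  proof (intro allI impI)
    fix i assume "Suc i < length (b#r)"
    then show "E ((b#r)!i) ((b#r)!Suc i)" using h[rule_format, of "Suc i"] by simp
  qed
  ultimately show ?thesis using s unfolding walk_def by auto
qed

lemma crossing: assumes "walk V E xs" "hd xs \<in> S" "last xs \<notin> S"
  shows "\<exists>x y. x \<in> S \<and> y \<in> V \<and> y \<notin> S \<and> E x y"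
  using assms
proof (induction xs)
  case Nil then show ?case by (simp add: walk_def)
next
  case (Cons a r)
  show ?case
  proof (cases r)
    case Nil then show ?thesis using Cons by simp
  next
    case (Cons b r')
    have w: "walk V E r" and e: "E a b" using walk_tail[of V E a b r'] Cons.prems(1) \<open>r = b # r'\<close> by auto
    show ?thesis
    proof (cases "b \<in> S")
      case True
      then show ?thesis using Cons.IH[OF w] Cons.prems \<open>r = b # r'\<close> by simp
    next
      case False
      have "b \<in> V" using w \<open>r = b # r'\<close> by (auto simp: walk_def)
      then show ?thesis using False e Cons.prems(2) by auto
    qed
  qed
qed

lemma key2: fixes p q p' q' s t :: real
  assumes "p + q = p' + q'" "p*s + q*t = p'*s + q'*t" "s \<noteq> t" shows "p = p' \<and> q = q'"
proof -
  have "p' = p + q - q'" using assms(1) by simp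
  have "(q - q')*(t - s) = (p*s + q*t) - ((p+q-q')*s + q'*t)" by (simp add: algebra_simps)
  also have "\<dots> = 0" using assms(2) \<open>p' = p + q - q'\<close> by simp
  finally have "(q - q')*(t - s) = 0" .
  then have "q = q'" using assms(3) by simp
  then show ?thesis using assms(1) by simp
qed

theorem theorem3p1:
  fixes V :: "'v set" and E :: "'v \<Rightarrow> 'v \<Rightarrow> bool" and m :: nat
    and u :: "'v \<Rightarrow> real" and \<theta> :: real and a :: "nat \<Rightarrow> real"
  assumes graph: "simple_graph V E"
    and conn: "connected_graph V E"
    and reg: "regular V E m"
    and eigen: "\<forall>x \<in> V. (\<Sum>y \<in> neighbours V E x. u y) = \<theta> * u x"
    and nonzero: "\<exists>x \<in> V. u x \<noteq> 0"
    and dist_vals: "a 0 \<noteq> a 1" "a 0 \<noteq> a 2" "a 1 \<noteq> a 2"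
    and vals: "u ` V = {a 0, a 1, a 2}"
    and no_edges: "\<forall>x \<in> V. \<forall>y \<in> V. u x = a 0 \<longrightarrow> u y = a 2 \<longrightarrow> \<not> E x y"
    and beta1: "\<exists>\<beta>1. \<forall>x \<in> {x \<in> V. u x = a 1}. card {y \<in> {y \<in> V. u y = a 2}. E x y} = \<beta>1"
  shows "(\<forall>i < 3. \<forall>j < 3. \<exists>c. \<forall>x \<in> {x \<in> V. u x = a i}.
            card {y \<in> {y \<in> V. u y = a j}. E x y} = c)
       \<and> completely_regular V E {x \<in> V. u x = a 0}
       \<and> (\<forall>i < 3. dist_layer V E {x \<in> V. u x = a 0} i = {x \<in> V. u x = a i})
       \<and> covering_radius V E {x \<in> V. u x = a 0} = 2"

proof -
  define C where "C = (\<lambda>j::nat. {x \<in> V. u x = a j})"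
  define N where "N = (\<lambda>j x. {y \<in> C j. E x y})"
  have fin: "finite V" and Esym: "\<And>x y. E x y \<Longrightarrow> E y x" and EV: "\<And>x y. E x y \<Longrightarrow> x \<in> V \<and> y \<in> V"
    using graph unfolding simple_graph_def by auto
  have finN: "\<And>j x. finite (N j x)" unfolding N_def C_def using fin by auto
  have uV: "\<And>y. y \<in> V \<Longrightarrow> u y = a 0 \<or> u y = a 1 \<or> u y = a 2" using vals by auto
  have nb: "\<And>x. neighbours V E x = N 0 x \<union> N 1 x \<union> N 2 x"
    unfolding neighbours_def N_def C_def using uV by auto
  have dis: "\<And>x. N 0 x \<inter> N 1 x = {}" "\<And>x. (N 0 x \<union> N 1 x) \<inter> N 2 x = {}"
    unfolding N_def C_def using dist_vals by auto
  have cardnb: "real m = real (card (N 0 x)) + real (card (N 1 x)) + real (card (N 2 x))" if "x \<in> V" for x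
  proof -
    have "card (neighbours V E x) = card (N 0 x) + card (N 1 x) + card (N 2 x)"
      unfolding nb using finN dis by (simp add: card_Un_disjoint)
    then show ?thesis using reg that unfolding regular_def by simp
  qed
  have sumN: "(\<Sum>y \<in> N j x. u y) = real (card (N j x)) * a j" for j x
  proof -
    have "(\<Sum>y \<in> N j x. u y) = (\<Sum>y \<in> N j x. a j)" by (rule sum.cong) (auto simp: N_def C_def)
    then show ?thesis by simp
  qed
  have eqs: "real (card (N 0 x)) * a 0 + real (card (N 1 x)) * a 1 + real (card (N 2 x)) * a 2 = \<theta> * u x"
    if "x \<in> V" for x
  proof -
    have "(\<Sum>y \<in> neighbours V E x. u y) = (\<Sum>y \<in> N 0 x. u y) + (\<Sum>y \<in> N 1 x. u y) + (\<Sum>y \<in> N 2 x. u y)"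
      unfolding nb using finN dis by (simp add: sum.union_disjoint)
    then show ?thesis using eigen that sumN by simp
  qed
  have N20: "N 2 x = {}" if "x \<in> C 0" for x using no_edges that unfolding N_def C_def by auto
  have N02: "N 0 x = {}" if "x \<in> C 2" for x using no_edges that Esym unfolding N_def C_def by blast
  obtain b1 where b1: "\<And>x. x \<in> C 1 \<Longrightarrow> card (N 2 x) = b1" using beta1 unfolding N_def C_def by auto
  have const: "card (N j x) = card (N j x')" if "i < 3" "j < 3" "x \<in> C i" "x' \<in> C i" for i j x x'
  proof -
    have xV: "x \<in> V" "x' \<in> V" using that C_def by auto
    have ux: "u x = a i" "u x' = a i" using that C_def by auto
    have "i = 0 \<or> i = 1 \<or> i = 2" using that by auto
    moreover have "j = 0 \<or> j = 1 \<or> j = 2" using that by auto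
    moreover
    { assume i: "i = 0"
      have "real (card (N 0 x)) = real (card (N 0 x')) \<and> real (card (N 1 x)) = real (card (N 1 x'))"
        apply (rule key2[where s="a 0" and t="a 1"])
        using cardnb[OF xV(1)] cardnb[OF xV(2)] eqs[OF xV(1)] eqs[OF xV(2)] N20 that ux dist_vals i by auto
      then have ?thesis using \<open>j = 0 \<or> j = 1 \<or> j = 2\<close> N20 that i by auto }
    moreover
    { assume i: "i = 2"
      have "real (card (N 1 x)) = real (card (N 1 x')) \<and> real (card (N 2 x)) = real (card (N 2 x'))"
        apply (rule key2[where s="a 1" and t="a 2"])
        using cardnb[OF xV(1)] cardnb[OF xV(2)] eqs[OF xV(1)] eqs[OF xV(2)] N02 that ux dist_vals i by auto
      then have ?thesis using \<open>j = 0 \<or> j = 1 \<or> j = 2\<close> N02 that i by auto }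
    moreover
    { assume i: "i = 1"
      have "real (card (N 0 x)) = real (card (N 0 x')) \<and> real (card (N 1 x)) = real (card (N 1 x'))"
        apply (rule key2[where s="a 0" and t="a 1"])
        using cardnb[OF xV(1)] cardnb[OF xV(2)] eqs[OF xV(1)] eqs[OF xV(2)] b1 that ux dist_vals i by auto
      then have ?thesis using \<open>j = 0 \<or> j = 1 \<or> j = 2\<close> b1 that i by auto }
    ultimately show ?thesis by blast
  qed
  have part1: "\<forall>i < 3. \<forall>j < 3. \<exists>c. \<forall>x \<in> C i. card (N j x) = c"
  proof (intro allI impI)
    fix i j :: nat assume "i < 3" "j < 3"
    show "\<exists>c. \<forall>x \<in> C i. card (N j x) = c"
    proof (cases "C i = {}")
      case True then show ?thesis by auto
    next
      case False
      then obtain x0 where "x0 \<in> C i" by auto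
      then show ?thesis using const[OF \<open>i < 3\<close> \<open>j < 3\<close>] by blast
    qed
  qed
  then obtain c where c: "\<And>i j x. i < 3 \<Longrightarrow> j < 3 \<Longrightarrow> x \<in> C i \<Longrightarrow> card (N j x) = c i j"
    by metis
  have Cne: "C j \<noteq> {}" if "j < 3" for j
  proof -
    have "j = 0 \<or> j = 1 \<or> j = 2" using that by auto
    moreover have "a 0 \<in> u ` V" "a 1 \<in> u ` V" "a 2 \<in> u ` V" using vals by auto
    ultimately show ?thesis unfolding C_def by auto
  qed
  obtain s0 where s0: "s0 \<in> C 0" using Cne[of 0] by auto
  obtain s2 where s2: "s2 \<in> C 2" using Cne[of 2] by auto
  have walkex: "\<exists>xs. walk V E xs \<and> hd xs = x \<and> last xs = y" if "x \<in> V" "y \<in> V" for x y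
    using conn that unfolding connected_graph_def by auto
  have c10: "\<exists>z \<in> C 0. E x z" if "x \<in> C 1" for x
  proof -
    obtain y where y: "y \<in> C 1" "N 0 y \<noteq> {}"
    proof -
      obtain xs where xs: "walk V E xs" "hd xs = s0" "last xs = s2"
        using walkex[of s0 s2] s0 s2 C_def by auto
      have "s2 \<notin> C 0" using s2 dist_vals unfolding C_def by auto
      then obtain p q where pq: "p \<in> C 0" "q \<in> V" "q \<notin> C 0" "E p q"
        using crossing[OF xs(1), of "C 0"] xs s0 by auto
      have "q \<notin> C 2" using N20[OF pq(1)] pq unfolding N_def by auto
      then have "q \<in> C 1" using pq uV unfolding C_def by auto
      moreover have "p \<in> N 0 q" using pq Esym unfolding N_def by auto
      ultimately show ?thesis using that by auto
    qed
    have "card (N 0 y) > 0" using y finN by (simp add: card_gt_0_iff)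
    then have "card (N 0 x) > 0" using const[of 1 0 x y] that y by auto
    then show ?thesis unfolding N_def by (auto simp: card_gt_0_iff)
  qed
  have c21: "\<exists>z \<in> C 1. E x z" if "x \<in> C 2" for x
  proof -
    obtain y where y: "y \<in> C 2" "N 1 y \<noteq> {}"
    proof -
      obtain xs where xs: "walk V E xs" "hd xs = s0" "last xs = s2"
        using walkex[of s0 s2] s0 s2 C_def by auto
      have "s2 \<notin> C 0 \<union> C 1" using s2 dist_vals unfolding C_def by auto
      then obtain p q where pq: "p \<in> C 0 \<union> C 1" "q \<in> V" "q \<notin> C 0 \<union> C 1" "E p q"
        using crossing[OF xs(1), of "C 0 \<union> C 1"] xs s0 by auto
      have "q \<in> C 2" using pq uV unfolding C_def by auto
      then have "p \<notin> C 0" using N20 pq unfolding N_def by auto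
      then have "p \<in> C 1" using pq by auto
      moreover have "p \<in> N 1 q" using pq Esym \<open>p \<in> C 1\<close> unfolding N_def by auto
      ultimately show ?thesis using that \<open>q \<in> C 2\<close> by auto
    qed
    have "card (N 1 y) > 0" using y finN by (simp add: card_gt_0_iff)
    then have "card (N 1 x) > 0" using const[of 2 1 x y] that y by auto
    then show ?thesis unfolding N_def by (auto simp: card_gt_0_iff)
  qed
  have no1: "\<not> reachable_from V E (C 0) x 0" if "x \<notin> C 0" for x
    using that unfolding reachable_from_def by (auto simp: length_Suc_conv)
  have no2: "\<not> reachable_from V E (C 0) x 1" if "x \<in> C 2" for x
  proof
    assume "reachable_from V E (C 0) x 1"
    then obtain p where "walk V E [p, x]" "p \<in> C 0"
      unfolding reachable_from_def by (auto simp: length_Suc_conv)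
    then have "E p x" unfolding walk_def by force
    then show False using N20[OF \<open>p \<in> C 0\<close>] that unfolding N_def by auto
  qed
  have dist: "(\<exists>n. reachable_from V E (C 0) x n) \<and> dist_set V E (C 0) x = j"
    if "j < 3" "x \<in> C j" for x j
  proof -
    have xV: "x \<in> V" using that C_def by auto
    have "j = 0 \<or> j = 1 \<or> j = 2" using that by auto
    moreover
    { assume j: "j = 0"
      have r: "reachable_from V E (C 0) x 0" unfolding reachable_from_def
        using that j xV by (intro exI[of _ "[x]"]) (auto simp: walk_def)
      then have ?thesis unfolding dist_set_def using j by (metis Least_eq_0) }
    moreover
    { assume j: "j = 1"
      have "x \<in> C 1" using that j by simp
      then obtain z where z: "z \<in> C 0" "E x z" using c10 by blast
      have r: "reachable_from V E (C 0) x 1" unfolding reachable_from_def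
        using z Esym[OF z(2)] xV EV[OF z(2)]
        by (intro exI[of _ "[z, x]"]) (auto simp: walk_def less_Suc_eq)
      have "x \<notin> C 0" using that j dist_vals unfolding C_def by auto
      then have "dist_set V E (C 0) x = 1" unfolding dist_set_def
        using r no1 by (intro Least_equality) (auto, metis One_nat_def Suc_leI neq0_conv)
      then have ?thesis using r j by auto }
    moreover
    { assume j: "j = 2"
      have "x \<in> C 2" using that j by simp
      then obtain y where y: "y \<in> C 1" "E x y" using c21 by blast
      obtain z where z: "z \<in> C 0" "E y z" using c10 y by auto
      have r: "reachable_from V E (C 0) x 2" unfolding reachable_from_def
        using z y Esym[OF z(2)] Esym[OF y(2)] xV EV[OF z(2)]
        by (intro exI[of _ "[z, y, x]"]) (auto simp: walk_def less_Suc_eq)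
      have "x \<notin> C 0" using that j dist_vals unfolding C_def by auto
      have "dist_set V E (C 0) x = 2" unfolding dist_set_def
      proof (rule Least_equality)
        show "reachable_from V E (C 0) x 2" by (rule r)
        fix n assume "reachable_from V E (C 0) x n"
        moreover have "x \<in> C 2" using that j by simp
        ultimately have "n \<noteq> 0" "n \<noteq> 1" using no1[OF \<open>x \<notin> C 0\<close>] no2 by metis+
        then show "2 \<le> n" by linarith
      qed
      then have ?thesis using r j by auto }
    ultimately show ?thesis by auto
  qed
  have layer: "dist_layer V E (C 0) i = (if i < 3 then C i else {})" for i
  proof -
    have "x \<in> dist_layer V E (C 0) i \<longleftrightarrow> (i < 3 \<and> x \<in> C i)" for x
    proof
      assume x: "x \<in> dist_layer V E (C 0) i"
      then have xV: "x \<in> V" and di: "dist_set V E (C 0) x = i" unfolding dist_layer_def by auto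
      obtain j where "j < 3" "x \<in> C j" using uV[OF xV] xV unfolding C_def
        by (metis (mono_tags, lifting) mem_Collect_eq numeral_3_eq_3 lessI less_SucI zero_less_Suc One_nat_def Suc_1)
      then show "i < 3 \<and> x \<in> C i" using dist[of j x] di by auto
    next
      assume "i < 3 \<and> x \<in> C i"
      then show "x \<in> dist_layer V E (C 0) i" using dist[of i x] unfolding dist_layer_def C_def by auto
    qed
    then show ?thesis by auto
  qed
  have cr: "completely_regular V E (C 0)"
    unfolding completely_regular_def
  proof (intro conjI allI)
    show "C 0 \<noteq> {}" using Cne by auto
    show "C 0 \<subseteq> V" unfolding C_def by auto
    fix i
    show "\<exists>\<gamma> \<alpha> \<beta>. \<forall>x \<in> dist_layer V E (C 0) i.
        card {y \<in> (if i = 0 then {} else dist_layer V E (C 0) (i - 1)). E x y} = \<gamma> \<and>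
        card {y \<in> dist_layer V E (C 0) i. E x y} = \<alpha> \<and>
        card {y \<in> dist_layer V E (C 0) (Suc i). E x y} = \<beta>"
    proof -
      have "i = 0 \<or> i = 1 \<or> i = 2 \<or> i \<ge> 3" by auto
      moreover
      { assume i: "i = 0"
        have ?thesis unfolding layer using i c[of 0 0] c[of 0 1]
          by (intro exI[of _ 0] exI[of _ "c 0 0"] exI[of _ "c 0 1"]) (simp add: N_def) }
      moreover
      { assume i: "i = 1"
        have L: "dist_layer V E (C 0) (i - 1) = C 0" "dist_layer V E (C 0) i = C 1"
             "dist_layer V E (C 0) (Suc i) = C 2" unfolding layer using i by (auto simp: numeral_2_eq_2)
        have ?thesis unfolding L using i c[of 1 0] c[of 1 1] c[of 1 2]
          by (intro exI[of _ "c 1 0"] exI[of _ "c 1 1"] exI[of _ "c 1 2"]) (simp add: N_def) }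
      moreover
      { assume i: "i = 2"
        have ?thesis unfolding layer using i c[of 2 1] c[of 2 2]
          by (intro exI[of _ "c 2 1"] exI[of _ "c 2 2"] exI[of _ 0]) (simp add: N_def) }
      moreover
      { assume i: "i \<ge> 3"
        have ?thesis unfolding layer using i by simp }
      ultimately show ?thesis by blast
    qed
  qed
  have "{i. dist_layer V E (C 0) i \<noteq> {}} = {0, 1, 2}"
    unfolding layer using Cne by (auto; presburger)
  then have rad: "covering_radius V E (C 0) = 2" unfolding covering_radius_def by simp
  show ?thesis
    using part1 cr rad layer unfolding N_def C_def by auto
qed

end
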